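(* Let $d\ge2$, $n\ge1$, and $k\ge 2\lceil\frac{n}{2d-2}\rceil$. Then for every $\mathbf{y}\in\{-1,1\}^n$ and for Lebesgue-almost every $X\in\mathbb{R}^{d\times n}$, there exist $\tilde W\in\mathbb{R}^{2k\times d}$ and $\tilde v>0$ such that, with $\tilde{\mathbf{v}}=(\tilde v,\dots,\tilde v,-\tilde v,\dots,-\tilde v)\in\mathbb{R}^{2k}$ ($k$ entries $\tilde v$ followed by $k$ entries $-\tilde v$), one has $\mathbf{y}=\tilde{\mathbf{v}}^\top\sigma(\tilde WX)$.
   Context: $\sigma(z)=\max\{\alpha z,z\}$ with a fixed $0<\alpha<1$ (Leaky ReLU), applied entrywise; the columns of $X$ are the data points, so $\tilde{\mathbf{v}}^\top\sigma(\tilde WX)\in\mathbb{R}^{1\times n}$ is the vector of network outputs on the $n$ points. *)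

theory Defs
  imports "HOL-Analysis.Analysis"
begin

definition leaky_relu :: "real \<Rightarrow> real \<Rightarrow> real" where
  "leaky_relu \<alpha> z = max (\<alpha> * z) z"

definition vtilde :: "nat \<Rightarrow> real \<Rightarrow> nat \<Rightarrow> real" where
  "vtilde k v i = (if i < k then v else - v)"

end

theory Submission
  imports Defs
begin

lemma span_image_sum_exists:
  fixes f :: "'n \<Rightarrow> 'a::real_vector"
  assumes "finite T" "v \<in> span (f ` T)"
  shows "\<exists>c. v = (\<Sum>j\<in>T. c j *\<^sub>R f j)"
  using assms
proof (induction T arbitrary: v rule: finite_induct)
  case empty then show ?case by simp
next
  case (insert a T)
  from insert.prems have "v \<in> span (insert (f a) (f ` T))" by simp
  then obtain k where k: "v - k *\<^sub>R f a \<in> span (f ` T)" by (auto simp: span_insert)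
  from insert.IH[OF k] obtain c where c: "v - k *\<^sub>R f a = (\<Sum>j\<in>T. c j *\<^sub>R f j)" by blast
  have "(\<Sum>j\<in>insert a T. (c(a:=k)) j *\<^sub>R f j) = k *\<^sub>R f a + (\<Sum>j\<in>T. c j *\<^sub>R f j)"
    using insert.hyps by (simp add: sum.insert) (rule sum.cong, auto)
  also have "\<dots> = v" using c by (simp add: algebra_simps)
  finally show ?case by metis
qed

lemma ax: fixes Z :: "real^'n^'d" shows "Z \<bullet> axis a (axis b 1) = Z $ a $ b"
  by (simp only: inner_axis) (simp add: inner_axis)
lemma basis_cart2: fixes i :: "real^'n^'d" assumes "i \<in> Basis" obtains a b where "i = axis a (axis b 1)"
  using assms by (auto simp: Basis_vec_def)

lemma negl_N:
  fixes j0 :: "'n::finite" and T :: "'n set"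
  assumes j0T: "j0 \<notin> T" and cT: "card T < CARD('d::finite)"
  shows "negligible {X :: real^'n^'d. column j0 X \<in> span ((\<lambda>j. column j X) ` T)}"
proof -
  obtain r0 :: 'd where True by blast
  have "card T \<le> card (UNIV - {r0} :: 'd set)" using cT by simp
  then obtain \<rho> where \<rho>: "\<rho> ` T \<subseteq> UNIV - {r0}" "inj_on \<rho> T"
    using card_le_inj[of T "UNIV - {r0}"] by auto
  define F :: "real^'n^'d \<Rightarrow> real^'n^'d" where
    "F = (\<lambda>Y. \<chi> a b. if b = j0 then (\<Sum>j\<in>T. Y$(\<rho> j)$j0 * Y$a$j) else Y$a$b)"
  define H where "H = {Y :: real^'n^'d. (axis r0 (axis j0 (1::real))) \<bullet> Y = 0}"
  have negH: "negligible H" unfolding H_def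
    by (rule negligible_hyperplane) (simp add: axis_eq_0_iff)
  have comp: "(\<lambda>Y::real^'n^'d. Y$p$q) differentiable (at Y0)" for p q Y0
  proof -
    have "bounded_linear (\<lambda>Y::real^'n^'d. Y$p$q)"
      using bounded_linear_compose[OF bounded_linear_vec_nth[of q] bounded_linear_vec_nth[of p]]
      by (simp add: o_def)
    then show ?thesis by (rule bounded_linear_imp_differentiable)
  qed
  have diff: "F differentiable_on H"
  proof (rule differentiable_at_imp_differentiable_on)
    fix Y0 assume "Y0 \<in> H"
    have "(\<lambda>Y. F Y \<bullet> i) differentiable (at Y0)" if iB: "i \<in> Basis" for i
    proof -
      obtain a b where i: "i = axis a (axis b 1)"
        using basis_cart2[OF iB] by blast
      have eq: "(\<lambda>Y. F Y \<bullet> i) = (\<lambda>Y. if b = j0 then (\<Sum>j\<in>T. Y$(\<rho> j)$j0 * Y$a$j) else Y$a$b)"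
        unfolding i ax by (simp add: F_def)
      show ?thesis
        unfolding eq by (cases "b = j0") (auto intro!: differentiable_sum differentiable_mult comp)
    qed
    then show "F differentiable (at Y0)"
      using differentiable_componentwise_within[of F Y0 UNIV] by simp
  qed
  have sub: "{X :: real^'n^'d. column j0 X \<in> span ((\<lambda>j. column j X) ` T)} \<subseteq> F ` H"
  proof
    fix X :: "real^'n^'d"
    assume "X \<in> {X. column j0 X \<in> span ((\<lambda>j. column j X) ` T)}"
    then obtain c where c: "column j0 X = (\<Sum>j\<in>T. c j *\<^sub>R column j X)"
      using span_image_sum_exists[of T] by auto
    define Y :: "real^'n^'d" where
      "Y = (\<chi> a b. if b = j0 then (if a \<in> \<rho> ` T then c (the_inv_into T \<rho> a) else 0) else X$a$b)"
    have "Y \<in> H" using \<rho>(1) by (auto simp: H_def Y_def inner_axis')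
    moreover have "F Y = X"
    proof (simp add: vec_eq_iff, intro allI)
      fix a b
      show "F Y $ a $ b = X $ a $ b"
      proof (cases "b = j0")
        case True
        have "F Y $ a $ b = (\<Sum>j\<in>T. c j * X$a$j)"
          using True j0T \<rho>(2) by (auto simp: F_def Y_def the_inv_into_f_f intro!: sum.cong)
        also have "\<dots> = (column j0 X) $ a" by (simp only: c) (simp add: column_def)
        also have "\<dots> = X $ a $ b" using True by (simp add: column_def)
        finally show ?thesis .
      qed (simp add: F_def Y_def)
    qed
    ultimately show "X \<in> F ` H" by (metis image_eqI)
  qed
  show ?thesis
    by (rule negligible_subset[OF negligible_differentiable_image_negligible[OF order_refl negH diff] sub])
qed


lemma avoid_hyperplanes:
  fixes A :: "'a::euclidean_space set"
  assumes "finite A" "0 \<notin> A"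
  shows "\<exists>u. \<forall>a\<in>A. a \<bullet> u \<noteq> 0"
proof (rule ccontr)
  assume "\<not> ?thesis"
  then have "UNIV = (\<Union>a\<in>A. {u. a \<bullet> u = 0})" by auto
  moreover have "negligible (\<Union>a\<in>A. {u. a \<bullet> u = 0})"
    using assms by (intro negligible_Union) (auto intro!: negligible_hyperplane)
  ultimately show False by simp
qed

lemma solve_inner:
  fixes f :: "'j \<Rightarrow> 'a::euclidean_space"
  assumes "finite J" "\<forall>j0\<in>J. f j0 \<notin> span (f ` (J - {j0}))"
  shows "\<exists>s. \<forall>j\<in>J. s \<bullet> f j = tg j"
proof -
  have "\<exists>z. (\<forall>w \<in> span (f ` (J - {j0})). z \<bullet> w = 0) \<and> z \<bullet> f j0 \<noteq> 0" if "j0 \<in> J" for j0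
  proof -
    obtain y z where yz: "y \<in> span (f ` (J - {j0}))"
      "\<And>w. w \<in> span (f ` (J - {j0})) \<Longrightarrow> orthogonal z w" "f j0 = y + z"
      using orthogonal_subspace_decomp_exists by blast
    have "z \<bullet> y = 0" using yz(1,2) by (simp add: orthogonal_def)
    then have e: "z \<bullet> f j0 = z \<bullet> z" by (simp add: yz(3) inner_add_right)
    have "z \<noteq> 0" using yz assms(2) that by auto
    then have "z \<bullet> f j0 \<noteq> 0" using e by simp
    then show ?thesis using yz(2) by (auto simp: orthogonal_def)
  qed
  then obtain z where z: "\<And>j0. j0 \<in> J \<Longrightarrow> (\<forall>w \<in> span (f ` (J - {j0})). z j0 \<bullet> w = 0) \<and> z j0 \<bullet> f j0 \<noteq> 0"
    by metis
  define s where "s = (\<Sum>j0\<in>J. (tg j0 / (z j0 \<bullet> f j0)) *\<^sub>R z j0)"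
  have "s \<bullet> f j = tg j" if j: "j \<in> J" for j
  proof -
    have "s \<bullet> f j = (\<Sum>j0\<in>J. (tg j0 / (z j0 \<bullet> f j0)) * (z j0 \<bullet> f j))"
      by (simp add: s_def inner_sum_left)
    also have "\<dots> = (\<Sum>j0\<in>J. if j0 = j then tg j else 0)"
    proof (rule sum.cong)
      fix j0 assume j0: "j0 \<in> J"
      show "(tg j0 / (z j0 \<bullet> f j0)) * (z j0 \<bullet> f j) = (if j0 = j then tg j else 0)"
      proof (cases "j0 = j")
        case False
        then have "f j \<in> span (f ` (J - {j0}))" using j by (intro span_base) auto
        then have "z j0 \<bullet> f j = 0" using z[OF j0] by blast
        then show ?thesis using False by simp
      qed (use z[OF j] in simp)
    qed simp
    also have "\<dots> = tg j" using j assms(1) by simp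
    finally show ?thesis .
  qed
  then show ?thesis by blast
qed

lemma leaky_pos: "0 < \<alpha> \<Longrightarrow> \<alpha> < 1 \<Longrightarrow> z > 0 \<Longrightarrow> leaky_relu \<alpha> z = z"
  unfolding leaky_relu_def by (simp add: max_def mult_le_cancel_right1 mult.commute)

lemma leaky_neg: "0 < \<alpha> \<Longrightarrow> \<alpha> < 1 \<Longrightarrow> z < 0 \<Longrightarrow> leaky_relu \<alpha> z = \<alpha> * z"
  unfolding leaky_relu_def by (simp add: max_def mult_le_cancel_right1 mult.commute)

lemma leaky_diff:
  assumes "0 < \<alpha>" "\<alpha> < 1" "B \<noteq> 0" "\<bar>e\<bar> < \<bar>B\<bar>"
  shows "leaky_relu \<alpha> (B + e) - leaky_relu \<alpha> B = (if B > 0 then 1 else \<alpha>) * e"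
proof (cases "B > 0")
  case True
  then have "B + e > 0" using assms by linarith
  then show ?thesis using True assms leaky_pos[of \<alpha>] by simp
next
  case False
  then have "B < 0" "B + e < 0" using assms by linarith+
  then show ?thesis using False assms leaky_neg[of \<alpha>] by (simp add: algebra_simps)
qed

lemma sum_split_if:
  fixes a :: "nat \<Rightarrow> real"
  assumes "g \<le> k"
  shows "(\<Sum>i<k. (if i < g then c1 else c2) * a i) = c1 * (\<Sum>i<g. a i) + c2 * ((\<Sum>i<k. a i) - (\<Sum>i<g. a i))"
  using assms
proof (induction k rule: dec_induct)
  case base
  show ?case by (simp add: sum_distrib_left)
next
  case (step m)
  then show ?case by (simp add: algebra_simps)
qed

lemma sum_double_range:
  "(\<Sum>i<k + m. f i) = (\<Sum>i<k. f i) + (\<Sum>i<m. f (i + k))" for f :: "nat \<Rightarrow> real"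
  by (induction m) (simp_all add: add.commute)


lemma main_construction:
  fixes \<alpha> :: real and k :: nat and y :: "real ^ 'n::finite" and X :: "real^'n^'d::finite"
  assumes \<alpha>: "0 < \<alpha>" "\<alpha> < 1" and d2: "CARD('d) \<ge> 2" and nk: "CARD('n) \<le> k * CARD('d)"
    and GP: "\<forall>j0 T. j0 \<notin> T \<longrightarrow> card T < CARD('d) \<longrightarrow> column j0 X \<notin> span ((\<lambda>j. column j X) ` T)"
  shows "\<exists>(W :: nat \<Rightarrow> real ^ 'd) (v :: real). v > 0 \<and>
             (\<forall>j. y $ j = (\<Sum>i<2*k. vtilde k v i * leaky_relu \<alpha> (W i \<bullet> column j X)))"
proof -
  define x where "x j = column j X" for j
  define d where "d = CARD('d)"
  define n where "n = CARD('n)"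
  have d0: "d > 0" using d2 by (simp add: d_def)
  have cn0: "0 < CARD('n)" by simp
  have k0: "k > 0" using nk cn0 by (cases k) auto
  have GPx: "x j0 \<notin> span (x ` T)" if "j0 \<notin> T" "card T < d" for j0 T
    using GP that by (simp add: x_def d_def)
  have x0: "x j \<noteq> 0" for j using GPx[of j "{}"] d0 by auto
  have x2: "x j \<notin> span {x j'}" if "j \<noteq> j'" for j j'
    using GPx[of j "{j'}"] that d2 by (simp add: d_def)
  have "0 \<notin> range x" using x0 by (metis rangeE)
  then obtain v where v: "\<forall>a\<in>range x. a \<bullet> v \<noteq> 0"
    using avoid_hyperplanes[of "range x"] by auto
  have vx: "v \<bullet> x j \<noteq> 0" for j using v by (simp add: inner_commute)
  define A where "A = {x j /\<^sub>R (v \<bullet> x j) - x j' /\<^sub>R (v \<bullet> x j') | j j'. j \<noteq> j'}"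
  have "finite A"
  proof -
    have "A \<subseteq> (\<lambda>(j, j'). x j /\<^sub>R (v \<bullet> x j) - x j' /\<^sub>R (v \<bullet> x j')) ` UNIV" by (auto simp: A_def)
    then show ?thesis by (rule finite_subset) simp
  qed
  moreover have "0 \<notin> A"
  proof
    assume "0 \<in> A"
    then obtain j j' where jj: "j \<noteq> j'" "x j /\<^sub>R (v \<bullet> x j) = x j' /\<^sub>R (v \<bullet> x j')"
      by (auto simp: A_def)
    have "x j = (v \<bullet> x j) *\<^sub>R (x j /\<^sub>R (v \<bullet> x j))" using vx[of j] by simp
    also have "\<dots> = (v \<bullet> x j) *\<^sub>R (x j' /\<^sub>R (v \<bullet> x j'))" using jj(2) by simp
    also have "\<dots> = ((v \<bullet> x j) / (v \<bullet> x j')) *\<^sub>R x j'" by (simp add: divide_inverse)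
    finally have "x j \<in> span {x j'}" by (metis span_base span_scale insertI1)
    then show False using x2 jj(1) by blast
  qed
  ultimately obtain u where u: "\<forall>a\<in>A. a \<bullet> u \<noteq> 0" using avoid_hyperplanes by blast
  define r where "r j = - (u \<bullet> x j) / (v \<bullet> x j)" for j
  have r_inj: "r j \<noteq> r j'" if "j \<noteq> j'" for j j'
  proof
    assume "r j = r j'"
    moreover have "(x j /\<^sub>R (v \<bullet> x j) - x j' /\<^sub>R (v \<bullet> x j')) \<bullet> u \<noteq> 0"
      using u that by (auto simp: A_def)
    ultimately show False
      by (simp add: r_def inner_diff_right inner_commute divide_inverse mult.commute)
  qed
  define rk where "rk j = card {j'. r j' < r j}" for j
  have rk_less: "rk j < rk j'" if "r j < r j'" for j j'
  proof -
    have "{j''. r j'' < r j} \<subset> {j''. r j'' < r j'}" using that by auto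
    then show ?thesis unfolding rk_def by (rule psubset_card_mono[rotated]) simp
  qed
  have rk_le: "rk j \<le> rk j'" if "r j \<le> r j'" for j j'
    unfolding rk_def by (rule card_mono) (use that in auto)
  have r_less: "r j < r j'" if "rk j < rk j'" for j j'
    using rk_le[of j' j] that by linarith
  have rk_inj: "inj rk"
  proof (rule injI)
    fix j j' assume "rk j = rk j'"
    then show "j = j'" using rk_less[of j j'] rk_less[of j' j] r_inj[of j j'] by linarith
  qed
  have rk_lt: "rk j < n" for j
  proof -
    have "{j'. r j' < r j} \<subseteq> UNIV - {j}" by auto
    then have "rk j \<le> card (UNIV - {j} :: 'n set)" unfolding rk_def by (rule card_mono[rotated]) simp
    moreover have "card (UNIV - {j} :: 'n set) = n - 1" by (simp add: n_def)
    ultimately show ?thesis using cn0 unfolding n_def by linarith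
  qed
  define g where "g j = rk j div d" for j
  have g_lt: "g j < k" for j
  proof -
    have "rk j < k * d" using rk_lt[of j] nk by (simp add: n_def d_def)
    then show ?thesis by (simp add: g_def less_mult_imp_div_less)
  qed
  have g_iff: "i < g j \<longleftrightarrow> Suc i * d \<le> rk j" for i j
    using less_eq_div_iff_mult_less_eq[OF d0, of "Suc i" "rk j"] unfolding g_def by linarith
  have gcard: "card {j. g j = p} \<le> d" for p
  proof -
    have "rk ` {j. g j = p} \<subseteq> {p*d..<p*d+d}"
    proof
      fix m assume "m \<in> rk ` {j. g j = p}"
      then obtain j where "m = rk j" "rk j div d = p" by (auto simp: g_def)
      then show "m \<in> {p*d..<p*d+d}"
        using div_mult_mod_eq[of "rk j" d] mod_less_divisor[OF d0, of "rk j"] by auto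
    qed
    then have "card (rk ` {j. g j = p}) \<le> d" using card_mono[of "{p*d..<p*d+d}"] by fastforce
    then show ?thesis using rk_inj by (simp add: card_image inj_on_subset)
  qed
  have solve_group: "\<exists>s. \<forall>j. g j = p \<longrightarrow> s \<bullet> x j = tg j" for p tg
  proof -
    have "\<forall>j0\<in>{j. g j = p}. x j0 \<notin> span (x ` ({j. g j = p} - {j0}))"
    proof
      fix j0 assume j0: "j0 \<in> {j. g j = p}"
      have "card ({j. g j = p} - {j0}) < d" using gcard[of p] j0 d0
        by (simp add: card_Diff_singleton)
      then show "x j0 \<notin> span (x ` ({j. g j = p} - {j0}))" by (intro GPx) auto
    qed
    from solve_inner[OF _ this, of tg] show ?thesis by auto
  qed

  define R where "R = range r"
  have finR: "finite R" "R \<noteq> {}" by (auto simp: R_def)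
  define mA where "mA i = Max (insert (Min R - 1) (r ` {j. rk j < Suc i * d}))" for i
  define mB where "mB i = Min (insert (Max R + 1) (r ` {j. Suc i * d \<le> rk j}))" for i
  define t where "t i = (mA i + mB i) / 2" for i
  have mAB: "mA i < mB i" for i
  proof -
    have all: "\<forall>a\<in>insert (Min R - 1) (r ` {j. rk j < Suc i * d}). \<forall>b\<in>insert (Max R + 1) (r ` {j. Suc i * d \<le> rk j}). a < b"
    proof (intro ballI)
      fix a b
      assume a: "a \<in> insert (Min R - 1) (r ` {j. rk j < Suc i * d})"
        and b: "b \<in> insert (Max R + 1) (r ` {j. Suc i * d \<le> rk j})"
      have minmax: "Min R \<le> r j" "r j \<le> Max R" for j using finR by (auto simp: R_def)
      show "a < b"
      proof (cases "a = Min R - 1")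
        case True
        show ?thesis
        proof (cases "b = Max R + 1")
          case True then show ?thesis using \<open>a = Min R - 1\<close> minmax(1)[of undefined] minmax(2)[of undefined] by linarith
        next
          case False
          then obtain jb where "b = r jb" using b by auto
          then show ?thesis using \<open>a = Min R - 1\<close> minmax(1)[of jb] by linarith
        qed
      next
        case False
        then obtain ja where ja: "a = r ja" "rk ja < Suc i * d" using a by auto
        show ?thesis
        proof (cases "b = Max R + 1")
          case True then show ?thesis using ja minmax(2)[of ja] by linarith
        next
          case False
          then obtain jb where "b = r jb" "Suc i * d \<le> rk jb" using b by auto
          then show ?thesis using ja r_less[of ja jb] by auto
        qed
      qed
    qed
    have "mA i \<in> insert (Min R - 1) (r ` {j. rk j < Suc i * d})"
      unfolding mA_def by (rule Max_in) auto
    then have "\<forall>b\<in>insert (Max R + 1) (r ` {j. Suc i * d \<le> rk j}). mA i < b" using all by blast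
    then show ?thesis unfolding mB_def by (subst Min_gr_iff) auto
  qed
  have t_less: "t i < r j \<longleftrightarrow> i < g j" for i j
  proof (cases "Suc i * d \<le> rk j")
    case True
    then have "mB i \<le> r j" unfolding mB_def by (intro Min_le) auto
    then show ?thesis using True mAB[of i] g_iff by (simp add: t_def)
  next
    case False
    then have "r j \<le> mA i" unfolding mA_def by (intro Max_ge) auto
    then show ?thesis using False mAB[of i] g_iff by (simp add: t_def)
  qed
  have t_neq: "t i \<noteq> r j" for i j
  proof (cases "Suc i * d \<le> rk j")
    case True
    then have "mB i \<le> r j" unfolding mB_def by (intro Min_le) auto
    then show ?thesis using mAB[of i] by (simp add: t_def)
  next
    case False
    then have "r j \<le> mA i" unfolding mA_def by (intro Max_ge) auto
    then show ?thesis using mAB[of i] by (simp add: t_def)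
  qed
  obtain S where S: "\<forall>j. g j = 0 \<longrightarrow> S \<bullet> x j = (if v \<bullet> x j > 0 then y$j else y$j / \<alpha>)"
    using solve_group[of 0 "\<lambda>j. if v \<bullet> x j > 0 then y$j else y$j / \<alpha>"] by blast
  have "\<forall>p. \<exists>s. \<forall>j. g j = p \<longrightarrow> s \<bullet> x j =
     (if v \<bullet> x j > 0 then (S \<bullet> x j - y$j) / (1 - \<alpha>) else (y$j - \<alpha> * (S \<bullet> x j)) / (1 - \<alpha>))"
    using solve_group[where tg="\<lambda>j. if v \<bullet> x j > 0 then (S \<bullet> x j - y$j) / (1 - \<alpha>) else (y$j - \<alpha> * (S \<bullet> x j)) / (1 - \<alpha>)"] by blast
  then obtain Zs where Zs: "\<And>p j. g j = p \<Longrightarrow> Zs p \<bullet> x j =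
     (if v \<bullet> x j > 0 then (S \<bullet> x j - y$j) / (1 - \<alpha>) else (y$j - \<alpha> * (S \<bullet> x j)) / (1 - \<alpha>))"
    by metis
  define Z where "Z p = (if p = 0 then 0 else if p < k then Zs p else S)" for p
  define \<delta> where "\<delta> i = Z (Suc i) - Z i" for i
  have tel: "(\<Sum>i<m. \<delta> i) = Z m" for m
    unfolding \<delta>_def sum_lessThan_telescope by (simp add: Z_def)
  define b where "b i = u + t i *\<^sub>R v" for i
  have bx: "b i \<bullet> x j = (v \<bullet> x j) * (t i - r j)" for i j
    using vx[of j] by (simp add: b_def r_def inner_add_left inner_commute algebra_simps)
  have bx0: "b i \<bullet> x j \<noteq> 0" for i j using bx vx t_neq by simp
  have bpos: "b i \<bullet> x j > 0 \<longleftrightarrow> (v \<bullet> x j > 0 \<longleftrightarrow> \<not> i < g j)" for i j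
  proof -
    have "t i - r j > 0 \<longleftrightarrow> \<not> i < g j" using t_less[of i j] t_neq[of i j] by auto
    then show ?thesis using vx[of j] t_neq[of i j] unfolding bx by (auto simp: zero_less_mult_iff)
  qed
  have lin: "(\<Sum>i<k. (if b i \<bullet> x j > 0 then 1 else \<alpha>) * (\<delta> i \<bullet> x j)) = y$j" for j
  proof -
    let ?g = "g j"
    have gk: "?g \<le> k" using g_lt[of j] by simp
    have sg: "(\<Sum>i<?g. \<delta> i \<bullet> x j) = Z ?g \<bullet> x j" by (simp add: tel inner_sum_left[symmetric])
    have sk: "(\<Sum>i<k. \<delta> i \<bullet> x j) = S \<bullet> x j" using k0 by (simp add: tel inner_sum_left[symmetric] Z_def)
    show ?thesis
    proof (cases "v \<bullet> x j > 0")
      case True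
      have "(\<Sum>i<k. (if b i \<bullet> x j > 0 then 1 else \<alpha>) * (\<delta> i \<bullet> x j))
          = (\<Sum>i<k. (if i < ?g then \<alpha> else 1) * (\<delta> i \<bullet> x j))"
        using True bpos by (intro sum.cong) auto
      also have "\<dots> = \<alpha> * (Z ?g \<bullet> x j) + ((S \<bullet> x j) - (Z ?g \<bullet> x j))"
        using sum_split_if[OF gk] sg sk by simp
      also have "\<dots> = y$j"
      proof (cases "?g = 0")
        case True then show ?thesis using S \<open>v \<bullet> x j > 0\<close> by (simp add: Z_def)
      next
        case False
        then have "Z ?g \<bullet> x j = (S \<bullet> x j - y$j) / (1 - \<alpha>)"
          using Zs[of j ?g] \<open>v \<bullet> x j > 0\<close> g_lt[of j] by (simp add: Z_def)
        then show ?thesis using \<alpha> by (simp add: field_simps)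
      qed
      finally show ?thesis .
    next
      case False
      then have vneg: "\<not> v \<bullet> x j > 0" by simp
      have "(\<Sum>i<k. (if b i \<bullet> x j > 0 then 1 else \<alpha>) * (\<delta> i \<bullet> x j))
          = (\<Sum>i<k. (if i < ?g then 1 else \<alpha>) * (\<delta> i \<bullet> x j))"
        using vneg bpos by (intro sum.cong) auto
      also have "\<dots> = (Z ?g \<bullet> x j) + \<alpha> * ((S \<bullet> x j) - (Z ?g \<bullet> x j))"
        using sum_split_if[OF gk] sg sk by simp
      also have "\<dots> = y$j"
      proof (cases "?g = 0")
        case True then show ?thesis using S vneg \<alpha> by (simp add: Z_def)
      next
        case False
        then have "Z ?g \<bullet> x j = (y$j - \<alpha> * (S \<bullet> x j)) / (1 - \<alpha>)"
          using Zs[of j ?g] vneg g_lt[of j] by (simp add: Z_def)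
        then show ?thesis using \<alpha> by (simp add: field_simps)
      qed
      finally show ?thesis .
    qed
  qed
  define lam where "lam = 1 + (\<Sum>i<k. \<Sum>j\<in>UNIV. \<bar>\<delta> i \<bullet> x j\<bar> / \<bar>b i \<bullet> x j\<bar>)"
  have lam_big: "\<bar>\<delta> i \<bullet> x j\<bar> < \<bar>lam * (b i \<bullet> x j)\<bar>" if "i < k" for i j
  proof -
    have "\<bar>\<delta> i \<bullet> x j\<bar> / \<bar>b i \<bullet> x j\<bar> \<le> (\<Sum>j\<in>UNIV. \<bar>\<delta> i \<bullet> x j\<bar> / \<bar>b i \<bullet> x j\<bar>)"
      by (rule member_le_sum) auto
    also have "\<dots> \<le> (\<Sum>i<k. \<Sum>j\<in>UNIV. \<bar>\<delta> i \<bullet> x j\<bar> / \<bar>b i \<bullet> x j\<bar>)"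
      by (rule member_le_sum[of i "{..<k}" "\<lambda>i. \<Sum>j\<in>UNIV. \<bar>\<delta> i \<bullet> x j\<bar> / \<bar>b i \<bullet> x j\<bar>"])
        (use that in \<open>auto intro: sum_nonneg\<close>)
    finally have le: "\<bar>\<delta> i \<bullet> x j\<bar> / \<bar>b i \<bullet> x j\<bar> \<le> lam - 1" by (simp add: lam_def)
    have bpos': "\<bar>b i \<bullet> x j\<bar> > 0" using bx0 by simp
    have "\<bar>\<delta> i \<bullet> x j\<bar> \<le> (lam - 1) * \<bar>b i \<bullet> x j\<bar>" using le bpos' by (simp add: divide_le_eq)
    also have "\<dots> < lam * \<bar>b i \<bullet> x j\<bar>" using bpos' by (simp add: algebra_simps)
    also have "\<dots> = \<bar>lam * (b i \<bullet> x j)\<bar>"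
    proof -
      have "lam \<ge> 1" unfolding lam_def by (auto intro!: sum_nonneg)
      then show ?thesis by (simp add: abs_mult)
    qed
    finally show ?thesis .
  qed
  have lampos: "lam > 0" unfolding lam_def by (auto intro!: sum_nonneg add_pos_nonneg)
  define W :: "nat \<Rightarrow> real^'d" where "W i = (if i < k then lam *\<^sub>R b i + \<delta> i else lam *\<^sub>R b (i - k))" for i
  have pair: "leaky_relu \<alpha> (W i \<bullet> x j) - leaky_relu \<alpha> (W (i + k) \<bullet> x j)
      = (if b i \<bullet> x j > 0 then 1 else \<alpha>) * (\<delta> i \<bullet> x j)" if "i < k" for i j
  proof -
    have "W i \<bullet> x j = lam * (b i \<bullet> x j) + \<delta> i \<bullet> x j" using that by (simp add: W_def inner_add_left)
    moreover have "W (i + k) \<bullet> x j = lam * (b i \<bullet> x j)" by (simp add: W_def)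
    moreover have "lam * (b i \<bullet> x j) > 0 \<longleftrightarrow> b i \<bullet> x j > 0" using lampos by (simp add: zero_less_mult_iff)
    moreover have "lam * (b i \<bullet> x j) \<noteq> 0" using lampos bx0 by simp
    ultimately show ?thesis using leaky_diff[OF \<alpha>, of "lam * (b i \<bullet> x j)" "\<delta> i \<bullet> x j"] lam_big[OF that] by simp
  qed
  have final: "y $ j = (\<Sum>i<2*k. vtilde k 1 i * leaky_relu \<alpha> (W i \<bullet> column j X))" for j
  proof -
    have "(\<Sum>i<2*k. vtilde k 1 i * leaky_relu \<alpha> (W i \<bullet> x j))
       = (\<Sum>i<k. vtilde k 1 i * leaky_relu \<alpha> (W i \<bullet> x j)) + (\<Sum>i<k. vtilde k 1 (i + k) * leaky_relu \<alpha> (W (i + k) \<bullet> x j))"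
      using sum_double_range[where k=k and m=k] by (simp add: mult_2)
    also have "\<dots> = (\<Sum>i<k. leaky_relu \<alpha> (W i \<bullet> x j) - leaky_relu \<alpha> (W (i + k) \<bullet> x j))"
      by (simp add: vtilde_def sum_subtractf sum_negf)
    also have "\<dots> = (\<Sum>i<k. (if b i \<bullet> x j > 0 then 1 else \<alpha>) * (\<delta> i \<bullet> x j))"
      using pair by (intro sum.cong) auto
    also have "\<dots> = y $ j" by (rule lin)
    finally show ?thesis by (simp add: x_def)
  qed
  show ?thesis
    by (rule exI[of _ W], rule exI[of _ 1]) (use final in simp)
qed


lemma AE_GP:
  "AE X in (lborel :: (real^'n::finite^'d::finite) measure).
     \<forall>j0 T. j0 \<notin> T \<longrightarrow> card T < CARD('d) \<longrightarrow> column j0 X \<notin> span ((\<lambda>j. column j X) ` T)"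
proof -
  define P :: "('n \<times> 'n set) set" where "P = {(j0, T). j0 \<notin> T \<and> card T < CARD('d)}"
  define B where "B = (\<Union>p\<in>P. {X :: real^'n^'d. column (fst p) X \<in> span ((\<lambda>j. column j X) ` snd p)})"
  have "negligible B" unfolding B_def
    by (rule negligible_Union) (auto simp: P_def intro!: negl_N)
  then have "B \<in> null_sets lebesgue" by (simp add: negligible_iff_null_sets)
  then have "AE (X::real^'n^'d) in lebesgue. \<forall>j0 T. j0 \<notin> T \<longrightarrow> card T < CARD('d) \<longrightarrow> column j0 X \<notin> span ((\<lambda>j. column j X) ` T)"
    by (rule AE_I') (auto simp: B_def P_def)
  then show ?thesis by (simp add: AE_completion_iff)
qed

theorem theorem5:
  fixes \<alpha> :: real and k :: nat and y :: "real ^ 'n"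
  assumes "0 < \<alpha>" and "\<alpha> < 1"
    and "CARD('d::finite) \<ge> 2"
    and "int k \<ge> 2 * \<lceil>real CARD('n::finite) / (2 * real CARD('d) - 2)\<rceil>"
    and "\<forall>j. y $ j \<in> {-1, 1}"
  shows "AE X in (lborel :: (real ^ 'n ^ 'd) measure).
           \<exists>(W :: nat \<Rightarrow> real ^ 'd) (v :: real). v > 0 \<and>
             (\<forall>j. y $ j = (\<Sum>i<2*k. vtilde k v i * leaky_relu \<alpha> (W i \<bullet> column j X)))"
proof -
  define n where "n = real CARD('n)"
  define d where "d = real CARD('d)"
  have d2: "d \<ge> 2" using assms(3) by (simp add: d_def)
  have c: "n / (2 * d - 2) \<le> of_int \<lceil>n / (2 * d - 2)\<rceil>" by (rule le_of_int_ceiling)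
  have "of_int (2 * \<lceil>n / (2 * d - 2)\<rceil>) \<le> (of_int (int k) :: real)"
    using assms(4) unfolding n_def d_def by (rule of_int_le_iff[THEN iffD2])
  then have "2 * (n / (2 * d - 2)) \<le> real k" using c by linarith
  then have "n \<le> real k * (d - 1)" using d2 by (simp add: field_simps)
  also have "\<dots> \<le> real k * d" by (simp add: mult_left_mono)
  finally have "real CARD('n) \<le> real (k * CARD('d))" by (simp add: n_def d_def)
  then have nk: "CARD('n) \<le> k * CARD('d)" by linarith
  show ?thesis
    by (rule eventually_mono[OF AE_GP]) (rule main_construction[OF assms(1,2,3) nk])
qed

end
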